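(* Let $\alpha\in(0,2\pi)$ and $\rho\in\mathbb C$, and let $$S=\begin{pmatrix}\cos\frac{\alpha}{2} & ie^{\rho/2}\sin\frac{\alpha}{2}\\ ie^{-\rho/2}\sin\frac{\alpha}{2} & \cos\frac{\alpha}{2}\end{pmatrix},\qquad T=\begin{pmatrix}\cos\frac{\alpha}{2} & ie^{-\rho/2}\sin\frac{\alpha}{2}\\ ie^{\rho/2}\sin\frac{\alpha}{2} & \cos\frac{\alpha}{2}\end{pmatrix}.$$ Put $A=\cot\frac{\alpha}{2}$, $V=\cosh\rho$ and $W=S^{-1}(STS^{-1}T^{-1})^2(ST^{-1}S^{-1}T)^2$. If $P(V,A)=0$, where $$P(V,A)=8V^5+8A^2V^4+(8A^4+16A^2-8)V^3+(4A^6+8A^4-12A^2)V^2+(A^8+4A^6-2A^4-12A^2+1)V-4A^6-8A^4+4A^2,$$ then $SWS^{-1}W^{-1}=I$, i.e. $s\mapsto S$, $t\mapsto T$ defines a representation $h$ of $\pi_1(X)=\langle s,t\mid sws^{-1}w^{-1}=1\rangle$, $w=s^{-1}[s,t]^2[s,t^{-1}]^2$, into $\mathrm{SL}(2,\mathbb C)$.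
   Context: $X$ is the complement of the link $7_3^2$ (slope $9/16$ version), with fundamental group $\pi_1(X)=\langle s,t\mid sws^{-1}w^{-1}=1\rangle$, $w=s^{-1}[s,t]^2[s,t^{-1}]^2$, and commutator convention $[a,b]=aba^{-1}b^{-1}$. The polynomial $P$ is called the Riley–Mednykh polynomial of the link $7_3^2$. *)

theory Defs
  imports "HOL-Analysis.Analysis"
begin

type_synonym cmat2 = "complex^2^2"

definition mat2 :: "complex \<Rightarrow> complex \<Rightarrow> complex \<Rightarrow> complex \<Rightarrow> cmat2" where
  "mat2 a b c d = vector [vector [a, b], vector [c, d]]"

definition S_mat :: "real \<Rightarrow> complex \<Rightarrow> cmat2" where
  "S_mat \<alpha> \<rho> = mat2 (of_real (cos (\<alpha>/2))) (\<i> * exp (\<rho>/2) * of_real (sin (\<alpha>/2)))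
                        (\<i> * exp (-\<rho>/2) * of_real (sin (\<alpha>/2))) (of_real (cos (\<alpha>/2)))"

definition T_mat :: "real \<Rightarrow> complex \<Rightarrow> cmat2" where
  "T_mat \<alpha> \<rho> = mat2 (of_real (cos (\<alpha>/2))) (\<i> * exp (-\<rho>/2) * of_real (sin (\<alpha>/2)))
                        (\<i> * exp (\<rho>/2) * of_real (sin (\<alpha>/2))) (of_real (cos (\<alpha>/2)))"

text \<open>Riley--Mednykh polynomial of the link 7_3^2.\<close>
definition RM_poly :: "complex \<Rightarrow> complex \<Rightarrow> complex" where
  "RM_poly V A = 8*V^5 + 8*A^2*V^4 + (8*A^4 + 16*A^2 - 8)*V^3 + (4*A^6 + 8*A^4 - 12*A^2)*V^2
     + (A^8 + 4*A^6 - 2*A^4 - 12*A^2 + 1)*V - 4*A^6 - 8*A^4 + 4*A^2"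

definition W_mat :: "cmat2 \<Rightarrow> cmat2 \<Rightarrow> cmat2" where
  "W_mat S T = (let Si = matrix_inv S; Ti = matrix_inv T;
                    c1 = S ** T ** Si ** Ti; c2 = S ** Ti ** Si ** T
                in Si ** (c1 ** c1) ** (c2 ** c2))"

end

theory Submission imports Defs begin

definition M4 :: "complex \<Rightarrow> complex \<Rightarrow> complex \<Rightarrow> complex \<Rightarrow> complex \<Rightarrow> complex \<Rightarrow> cmat2" where
  "M4 x k a b c d = mat2 (k*a) (k*\<i>*x*b) (k*\<i>/x*c) (k*d)"

lemma M4_mult:
  assumes "x \<noteq> 0"
  shows "M4 x k a b c d ** M4 x l e f g h = M4 x (k*l) (a*e - b*g) (a*f + b*h) (c*e + d*g) (d*h - c*f)"
  using assms
  by (simp add: M4_def mat2_def matrix_matrix_mult_def vec_eq_iff forall_2 sum_2 field_simps)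

lemma M4_one: "x \<noteq> 0 \<Longrightarrow> mat 1 = M4 x 1 1 0 0 1"
  by (simp add: M4_def mat2_def vec_eq_iff forall_2 mat_def)

lemma M4_cong: "k = k' \<Longrightarrow> a = a' \<Longrightarrow> b = b' \<Longrightarrow> c = c' \<Longrightarrow> d = d' \<Longrightarrow> M4 x k a b c d = M4 x k' a' b' c' d'"
  by simp

lemma inv_unique:
  fixes A B :: cmat2
  assumes "A ** B = mat 1" "B ** A = mat 1"
  shows "matrix_inv A = B" "invertible A"
proof -
  show inv: "invertible A" using assms unfolding invertible_def by blast
  have "A ** matrix_inv A = mat 1 \<and> matrix_inv A ** A = mat 1"
    unfolding matrix_inv_def by (rule someI[of _ B]) (use assms in blast)
  then show "matrix_inv A = B" using assms by (metis matrix_mul_assoc matrix_mul_lid matrix_mul_rid)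
qed

lemma inv_right:
  fixes A :: cmat2
  assumes "invertible A" shows "A ** matrix_inv A = mat 1"
  using assms unfolding invertible_def matrix_inv_def by (metis (mono_tags, lifting) someI)


lemma M4_scale: "M4 x k a b c d = M4 x 1 (k*a) (k*b) (k*c) (k*d)"
  by (simp add: M4_def mult_ac)

lemma core:
  fixes x y s A :: complex
  assumes x0: "x \<noteq> 0" and y0: "y \<noteq> 0" and sA: "s^2*(A^2+1) = 1"
    and Pc: "(1 + y^2 + y^8 + y^10 + 2*A^2*y + 8*A^2*y^2 - 4*A^2*y^3 + 4*A^2*y^5 - 4*A^2*y^7 + 8*A^2*y^8 + 2*A^2*y^9 + 4*A^4*y^2 + 8*A^4*y^3 + 8*A^4*y^4 - 16*A^4*y^5 + 8*A^4*y^6 + 8*A^4*y^7 + 4*A^4*y^8 + 4*A^6*y^3 + 8*A^6*y^4 - 8*A^6*y^5 + 8*A^6*y^6 + 4*A^6*y^7 + 2*A^8*y^4 + 2*A^8*y^6) = 0"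
  shows "M4 x s A 1 1 A ** W_mat (M4 x s A 1 1 A) (M4 x (s/y) (A*y) 1 (y^2) (A*y))
      ** matrix_inv (M4 x s A 1 1 A) ** matrix_inv (W_mat (M4 x s A 1 1 A) (M4 x (s/y) (A*y) 1 (y^2) (A*y))) = mat 1"
proof -
  define S where "S = M4 x s A 1 1 A"
  define T where "T = M4 x (s/y) (A*y) 1 (y^2) (A*y)"
  define Si where "Si = M4 x s A (-1) (-1) A"
  define Ti where "Ti = M4 x (s/y) (A*y) (-1) (-(y^2)) (A*y)"
  have sA': "s * s * (A*A+1) = 1" using sA by (simp add: power2_eq_square)
  have e1: "S ** Si = mat 1" unfolding S_def Si_def M4_one[OF x0] M4_mult[OF x0]
    by (subst M4_scale, subst (2) M4_scale, rule M4_cong) (use sA' in \<open>simp_all add: algebra_simps\<close>)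
  have e2: "Si ** S = mat 1" unfolding S_def Si_def M4_one[OF x0] M4_mult[OF x0]
    by (subst M4_scale, subst (2) M4_scale, rule M4_cong) (use sA' in \<open>simp_all add: algebra_simps\<close>)
  have "s/y * (s/y) * (A*y*(A*y)+y^2) = s * s * (A*A+1)" using y0 by (simp add: field_simps power2_eq_square)
  then have sB: "s/y * (s/y) * (A*y*(A*y)+y^2) = 1" using sA' by simp
  have e3: "T ** Ti = mat 1" unfolding T_def Ti_def M4_one[OF x0] M4_mult[OF x0]
    by (subst M4_scale, subst (2) M4_scale, rule M4_cong) (use sB in \<open>simp_all add: algebra_simps\<close>)
  have e4: "Ti ** T = mat 1" unfolding T_def Ti_def M4_one[OF x0] M4_mult[OF x0]
    by (subst M4_scale, subst (2) M4_scale, rule M4_cong) (use sB in \<open>simp_all add: algebra_simps\<close>)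
  have iS: "matrix_inv S = Si" "invertible S" using inv_unique[OF e1 e2] by auto
  have iT: "matrix_inv T = Ti" "invertible T" using inv_unique[OF e3 e4] by auto
  have iSi: "invertible Si" "invertible Ti" using e1 e2 e3 e4 unfolding invertible_def by blast+
  have c1: "S ** T ** Si ** Ti = (M4 x (s * (s/y) * s * (s/y)) (y^4 + A^2*y + 2*A^2*y^2 - A^2*y^3 + A^4*y^2) (- (A) - A*y + A*y^2 + A*y^3) (A*y + A*y^2 - A*y^3 - A*y^4) (1 - A^2*y + 2*A^2*y^2 + A^2*y^3 + A^4*y^2))"
    unfolding S_def T_def Si_def Ti_def M4_mult[OF x0] by (rule M4_cong[OF refl]; algebra)
  have c2: "S ** Ti ** Si ** T = (M4 x (s * (s/y) * s * (s/y)) (y^4 - A^2*y + 2*A^2*y^2 + A^2*y^3 + A^4*y^2) (- (A) + A*y + A*y^2 - A*y^3) (- (A*y) + A*y^2 + A*y^3 - A*y^4) (1 + A^2*y + 2*A^2*y^2 - A^2*y^3 + A^4*y^2))"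
    unfolding S_def T_def Si_def Ti_def M4_mult[OF x0] by (rule M4_cong[OF refl]; algebra)
  have cc1: "(M4 x (s * (s/y) * s * (s/y)) (y^4 + A^2*y + 2*A^2*y^2 - A^2*y^3 + A^4*y^2) (- (A) - A*y + A*y^2 + A*y^3) (A*y + A*y^2 - A*y^3 - A*y^4) (1 - A^2*y + 2*A^2*y^2 + A^2*y^3 + A^4*y^2)) ** (M4 x (s * (s/y) * s * (s/y)) (y^4 + A^2*y + 2*A^2*y^2 - A^2*y^3 + A^4*y^2) (- (A) - A*y + A*y^2 + A*y^3) (A*y + A*y^2 - A*y^3 - A*y^4) (1 - A^2*y + 2*A^2*y^2 + A^2*y^3 + A^4*y^2)) = (M4 x ((s * (s/y) * s * (s/y))*(s * (s/y) * s * (s/y))) (y^8 + A^2*y + 2*A^2*y^2 - A^2*y^3 - 4*A^2*y^4 + A^2*y^5 + 6*A^2*y^6 - A^2*y^7 + A^4*y^2 + 4*A^4*y^3 + 2*A^4*y^4 - 4*A^4*y^5 + 3*A^4*y^6 + 2*A^6*y^3 + 4*A^6*y^4 - 2*A^6*y^5 + A^8*y^4) (- (A) - A*y + A*y^2 + A*y^3 - A*y^4 - A*y^5 + A*y^6 + A*y^7 - 4*A^3*y^2 - 4*A^3*y^3 + 4*A^3*y^4 + 4*A^3*y^5 - 2*A^5*y^2 - 2*A^5*y^3 + 2*A^5*y^4 + 2*A^5*y^5) (A*y + A*y^2 - A*y^3 - A*y^4 + A*y^5 + A*y^6 - A*y^7 - A*y^8 + 4*A^3*y^3 + 4*A^3*y^4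 - 4*A^3*y^5 - 4*A^3*y^6 + 2*A^5*y^3 + 2*A^5*y^4 - 2*A^5*y^5 - 2*A^5*y^6) (1 - A^2*y + 6*A^2*y^2 + A^2*y^3 - 4*A^2*y^4 - A^2*y^5 + 2*A^2*y^6 + A^2*y^7 + 3*A^4*y^2 - 4*A^4*y^3 + 2*A^4*y^4 + 4*A^4*y^5 + A^4*y^6 - 2*A^6*y^3 + 4*A^6*y^4 + 2*A^6*y^5 + A^8*y^4))"
    unfolding M4_mult[OF x0] by (rule M4_cong[OF refl]; algebra)
  have cc2: "(M4 x (s * (s/y) * s * (s/y)) (y^4 - A^2*y + 2*A^2*y^2 + A^2*y^3 + A^4*y^2) (- (A) + A*y + A*y^2 - A*y^3) (- (A*y) + A*y^2 + A*y^3 - A*y^4) (1 + A^2*y + 2*A^2*y^2 - A^2*y^3 + A^4*y^2)) ** (M4 x (s * (s/y) * s * (s/y)) (y^4 - A^2*y + 2*A^2*y^2 + A^2*y^3 + A^4*y^2) (- (A) + A*y + A*y^2 - A*y^3) (- (A*y) + A*y^2 + A*y^3 - A*y^4) (1 + A^2*y + 2*A^2*y^2 - A^2*y^3 + A^4*y^2)) = (M4 x ((s * (s/y) * s * (s/y))*(s * (s/y) * s * (s/y))) (y^8 - A^2*y + 2*A^2*y^2 + A^2*y^3 - 4*A^2*y^4 - A^2*y^5 + 6*A^2*y^6 + A^2*y^7 + A^4*y^2 - 4*A^4*y^3 + 2*A^4*y^4 + 4*A^4*y^5 + 3*A^4*y^6 - 2*A^6*y^3 + 4*A^6*y^4 +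 2*A^6*y^5 + A^8*y^4) (- (A) + A*y + A*y^2 - A*y^3 - A*y^4 + A*y^5 + A*y^6 - A*y^7 - 4*A^3*y^2 + 4*A^3*y^3 + 4*A^3*y^4 - 4*A^3*y^5 - 2*A^5*y^2 + 2*A^5*y^3 + 2*A^5*y^4 - 2*A^5*y^5) (- (A*y) + A*y^2 + A*y^3 - A*y^4 - A*y^5 + A*y^6 + A*y^7 - A*y^8 - 4*A^3*y^3 + 4*A^3*y^4 + 4*A^3*y^5 - 4*A^3*y^6 - 2*A^5*y^3 + 2*A^5*y^4 + 2*A^5*y^5 - 2*A^5*y^6) (1 + A^2*y + 6*A^2*y^2 - A^2*y^3 - 4*A^2*y^4 + A^2*y^5 + 2*A^2*y^6 - A^2*y^7 + 3*A^4*y^2 + 4*A^4*y^3 + 2*A^4*y^4 - 4*A^4*y^5 + A^4*y^6 + 2*A^6*y^3 + 4*A^6*y^4 - 2*A^6*y^5 + A^8*y^4))"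
    unfolding M4_mult[OF x0] by (rule M4_cong[OF refl]; algebra)
  have sc: "Si ** (M4 x ((s * (s/y) * s * (s/y))*(s * (s/y) * s * (s/y))) (y^8 + A^2*y + 2*A^2*y^2 - A^2*y^3 - 4*A^2*y^4 + A^2*y^5 + 6*A^2*y^6 - A^2*y^7 + A^4*y^2 + 4*A^4*y^3 + 2*A^4*y^4 - 4*A^4*y^5 + 3*A^4*y^6 + 2*A^6*y^3 + 4*A^6*y^4 - 2*A^6*y^5 + A^8*y^4) (- (A) - A*y + A*y^2 + A*y^3 - A*y^4 - A*y^5 + A*y^6 + A*y^7 - 4*A^3*y^2 - 4*A^3*y^3 + 4*A^3*y^4 + 4*A^3*y^5 - 2*A^5*y^2 - 2*A^5*y^3 + 2*A^5*y^4 + 2*A^5*y^5) (A*y + A*y^2 - A*y^3 - A*y^4 + A*y^5 + A*y^6 - A*y^7 - A*y^8 + 4*A^3*y^3 + 4*A^3*y^4 - 4*A^3*y^5 - 4*A^3*y^6 + 2*A^5*y^3 + 2*A^5*y^4 - 2*A^5*y^5 - 2*A^5*y^6) (1 - A^2*y + 6*A^2*y^2 + A^2*y^3 - 4*A^2*y^4 - A^2*y^5 + 2*A^2*y^6 + A^2*y^7 + 3*A^4*y^2 - 4*A^4*y^3 + 2*A^4*y^4 + 4*A^4*y^5 + A^4*y^6 - 2*A^6*y^3 + 4*A^6*y^4 + 2*A^6*y^5 + A^8*y^4)) = (M4 x (s * ((s * (s/y) * s * (s/y))*(s * (s/y) * s * (s/y)))) (A*y + A*y^2 - A*y^3 - A*y^4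 + A*y^5 + A*y^6 - A*y^7 + A^3*y + 2*A^3*y^2 + 3*A^3*y^3 - 3*A^3*y^5 + 2*A^3*y^6 - A^3*y^7 + A^5*y^2 + 6*A^5*y^3 + 4*A^5*y^4 - 6*A^5*y^5 + A^5*y^6 + 2*A^7*y^3 + 4*A^7*y^4 - 2*A^7*y^5 + A^9*y^4) (- (1) - A^2 - 5*A^2*y^2 + 3*A^2*y^4 - A^2*y^6 - 7*A^4*y^2 + 2*A^4*y^4 - A^4*y^6 - 2*A^6*y^2 - 2*A^6*y^4 - A^8*y^4) (- (y^8) - A^2*y^2 + 3*A^2*y^4 - 5*A^2*y^6 - A^2*y^8 - A^4*y^2 + 2*A^4*y^4 - 7*A^4*y^6 - 2*A^6*y^4 - 2*A^6*y^6 - A^8*y^4) (- (A*y) + A*y^2 + A*y^3 - A*y^4 - A*y^5 + A*y^6 + A*y^7 - A^3*y + 2*A^3*y^2 - 3*A^3*y^3 + 3*A^3*y^5 + 2*A^3*y^6 + A^3*y^7 + A^5*y^2 - 6*A^5*y^3 + 4*A^5*y^4 + 6*A^5*y^5 + A^5*y^6 - 2*A^7*y^3 + 4*A^7*y^4 + 2*A^7*y^5 + A^9*y^4))"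
    unfolding Si_def M4_mult[OF x0] by (rule M4_cong[OF refl]; algebra)
  have w: "(M4 x (s * ((s * (s/y) * s * (s/y))*(s * (s/y) * s * (s/y)))) (A*y + A*y^2 - A*y^3 - A*y^4 + A*y^5 + A*y^6 - A*y^7 + A^3*y + 2*A^3*y^2 + 3*A^3*y^3 - 3*A^3*y^5 + 2*A^3*y^6 - A^3*y^7 + A^5*y^2 + 6*A^5*y^3 + 4*A^5*y^4 - 6*A^5*y^5 + A^5*y^6 + 2*A^7*y^3 + 4*A^7*y^4 - 2*A^7*y^5 + A^9*y^4) (- (1) - A^2 - 5*A^2*y^2 + 3*A^2*y^4 - A^2*y^6 - 7*A^4*y^2 + 2*A^4*y^4 - A^4*y^6 - 2*A^6*y^2 - 2*A^6*y^4 - A^8*y^4) (- (y^8) - A^2*y^2 + 3*A^2*y^4 - 5*A^2*y^6 - A^2*y^8 - A^4*y^2 + 2*A^4*y^4 - 7*A^4*y^6 - 2*A^6*y^4 - 2*A^6*y^6 - A^8*y^4) (- (A*y) + A*y^2 + A*y^3 - A*y^4 - A*y^5 + A*y^6 + A*y^7 - A^3*y + 2*A^3*y^2 - 3*A^3*y^3 + 3*A^3*y^5 + 2*A^3*y^6 + A^3*y^7 + A^5*y^2 - 6*A^5*y^3 + 4*A^5*y^4 + 6*A^5*y^5 + A^5*y^6 - 2*A^7*y^3 + 4*A^7*y^4 + 2*A^7*y^5 + A^9*y^4)) ** (M4 x ((s * (s/y) * s * (s/y))*(s * (s/y) * s * (s/y))) (y^8 - A^2*y + 2*A^2*y^2 +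 A^2*y^3 - 4*A^2*y^4 - A^2*y^5 + 6*A^2*y^6 + A^2*y^7 + A^4*y^2 - 4*A^4*y^3 + 2*A^4*y^4 + 4*A^4*y^5 + 3*A^4*y^6 - 2*A^6*y^3 + 4*A^6*y^4 + 2*A^6*y^5 + A^8*y^4) (- (A) + A*y + A*y^2 - A*y^3 - A*y^4 + A*y^5 + A*y^6 - A*y^7 - 4*A^3*y^2 + 4*A^3*y^3 + 4*A^3*y^4 - 4*A^3*y^5 - 2*A^5*y^2 + 2*A^5*y^3 + 2*A^5*y^4 - 2*A^5*y^5) (- (A*y) + A*y^2 + A*y^3 - A*y^4 - A*y^5 + A*y^6 + A*y^7 - A*y^8 - 4*A^3*y^3 + 4*A^3*y^4 + 4*A^3*y^5 - 4*A^3*y^6 - 2*A^5*y^3 + 2*A^5*y^4 + 2*A^5*y^5 - 2*A^5*y^6) (1 + A^2*y + 6*A^2*y^2 - A^2*y^3 - 4*A^2*y^4 + A^2*y^5 + 2*A^2*y^6 - A^2*y^7 + 3*A^4*y^2 + 4*A^4*y^3 + 2*A^4*y^4 - 4*A^4*y^5 + A^4*y^6 + 2*A^6*y^3 + 4*A^6*y^4 - 2*A^6*y^5 + A^8*y^4)) = (M4 x ((s * ((s * (s/y) * s * (s/y))*(s * (s/y) * s * (s/y))))*((s * (s/y) * s * (s/y))*(s * (s/y) * s * (s/y)))) (- (A*y) + A*y^2 + A*y^3 - A*y^4 - A*y^5 + A*y^6 + A*y^7 - A*y^8 + A*y^9 + A*y^10 - A*y^11 - A*y^12 + A*y^13 +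 A*y^14 - A*y^15 - A^3*y - 7*A^3*y^3 + 12*A^3*y^4 + 7*A^3*y^5 - 20*A^3*y^6 + A^3*y^7 + 24*A^3*y^8 + A^3*y^9 - 20*A^3*y^10 + 7*A^3*y^11 + 12*A^3*y^12 - 7*A^3*y^13 - A^3*y^15 - A^5*y^2 - 12*A^5*y^3 + 12*A^5*y^4 - 4*A^5*y^5 + 11*A^5*y^6 + 16*A^5*y^7 - 16*A^5*y^8 + 16*A^5*y^9 + 11*A^5*y^10 - 4*A^5*y^11 + 12*A^5*y^12 - 12*A^5*y^13 - A^5*y^14 - 4*A^7*y^3 - 4*A^7*y^4 - 28*A^7*y^5 + 56*A^7*y^6 + 32*A^7*y^7 - 48*A^7*y^8 + 32*A^7*y^9 + 56*A^7*y^10 - 28*A^7*y^11 - 4*A^7*y^12 - 4*A^7*y^13 - 3*A^9*y^4 - 20*A^9*y^5 + 22*A^9*y^6 + 20*A^9*y^7 + 32*A^9*y^8 + 20*A^9*y^9 + 22*A^9*y^10 - 20*A^9*y^11 - 3*A^9*y^12 - 4*A^11*y^5 - 4*A^11*y^6 + 4*A^11*y^7 + 64*A^11*y^8 + 4*A^11*y^9 - 4*A^11*y^10 - 4*A^11*y^11 - 2*A^13*y^6 + 32*A^13*y^8 - 2*A^13*y^10 + 8*A^15*y^8 + A^17*y^8) (- (1) - A^2 - 2*A^2*y - 11*A^2*y^2 + 4*A^2*y^3 + 7*A^2*y^4 - 6*A^2*y^5 - 3*A^2*y^6 + 8*A^2*y^7 - A^2*y^8 - 6*A^2*y^9 + A^2*y^10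 + 4*A^2*y^11 - A^2*y^12 - 2*A^2*y^13 + A^2*y^14 - 2*A^4*y - 17*A^4*y^2 - 12*A^4*y^3 - 22*A^4*y^4 + 26*A^4*y^5 + 25*A^4*y^6 - 24*A^4*y^7 - 20*A^4*y^8 + 26*A^4*y^9 - A^4*y^10 - 12*A^4*y^11 + 6*A^4*y^12 - 2*A^4*y^13 + A^4*y^14 - 6*A^6*y^2 - 24*A^6*y^3 - 66*A^6*y^4 + 16*A^6*y^5 + 44*A^6*y^6 + 16*A^6*y^7 - 52*A^6*y^8 + 16*A^6*y^9 + 14*A^6*y^10 - 24*A^6*y^11 + 10*A^6*y^12 - 8*A^8*y^3 - 47*A^8*y^4 - 48*A^8*y^5 - 12*A^8*y^6 + 112*A^8*y^7 - 42*A^8*y^8 - 48*A^8*y^9 + 28*A^8*y^10 - 8*A^8*y^11 + 3*A^8*y^12 - 10*A^10*y^4 - 40*A^10*y^5 - 50*A^10*y^6 + 80*A^10*y^7 - 10*A^10*y^8 - 40*A^10*y^9 + 14*A^10*y^10 - 8*A^12*y^5 - 26*A^12*y^6 + 16*A^12*y^7 - 4*A^12*y^8 - 8*A^12*y^9 + 2*A^12*y^10 - 4*A^14*y^6 - 4*A^14*y^8 - A^16*y^8) (- (y^16) + A^2*y^2 - 2*A^2*y^3 - A^2*y^4 + 4*A^2*y^5 + A^2*y^6 - 6*A^2*y^7 - A^2*y^8 + 8*A^2*y^9 - 3*A^2*y^10 - 6*A^2*y^11 + 7*A^2*y^12 + 4*A^2*y^13 - 11*A^2*y^14 - 2*A^2*y^15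 - A^2*y^16 + A^4*y^2 - 2*A^4*y^3 + 6*A^4*y^4 - 12*A^4*y^5 - A^4*y^6 + 26*A^4*y^7 - 20*A^4*y^8 - 24*A^4*y^9 + 25*A^4*y^10 + 26*A^4*y^11 - 22*A^4*y^12 - 12*A^4*y^13 - 17*A^4*y^14 - 2*A^4*y^15 + 10*A^6*y^4 - 24*A^6*y^5 + 14*A^6*y^6 + 16*A^6*y^7 - 52*A^6*y^8 + 16*A^6*y^9 + 44*A^6*y^10 + 16*A^6*y^11 - 66*A^6*y^12 - 24*A^6*y^13 - 6*A^6*y^14 + 3*A^8*y^4 - 8*A^8*y^5 + 28*A^8*y^6 - 48*A^8*y^7 - 42*A^8*y^8 + 112*A^8*y^9 - 12*A^8*y^10 - 48*A^8*y^11 - 47*A^8*y^12 - 8*A^8*y^13 + 14*A^10*y^6 - 40*A^10*y^7 - 10*A^10*y^8 + 80*A^10*y^9 - 50*A^10*y^10 - 40*A^10*y^11 - 10*A^10*y^12 + 2*A^12*y^6 - 8*A^12*y^7 - 4*A^12*y^8 + 16*A^12*y^9 - 26*A^12*y^10 - 8*A^12*y^11 - 4*A^14*y^8 - 4*A^14*y^10 - A^16*y^8) (- (A*y) + A*y^2 + A*y^3 - A*y^4 - A*y^5 + A*y^6 + A*y^7 - A*y^8 + A*y^9 + A*y^10 - A*y^11 - A*y^12 + A*y^13 + A*y^14 - A*y^15 - A^3*y - 7*A^3*y^3 + 12*A^3*y^4 + 7*A^3*y^5 - 20*A^3*y^6 + A^3*y^7 + 24*A^3*y^8 + A^3*y^9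 - 20*A^3*y^10 + 7*A^3*y^11 + 12*A^3*y^12 - 7*A^3*y^13 - A^3*y^15 - A^5*y^2 - 12*A^5*y^3 + 12*A^5*y^4 - 4*A^5*y^5 + 11*A^5*y^6 + 16*A^5*y^7 - 16*A^5*y^8 + 16*A^5*y^9 + 11*A^5*y^10 - 4*A^5*y^11 + 12*A^5*y^12 - 12*A^5*y^13 - A^5*y^14 - 4*A^7*y^3 - 4*A^7*y^4 - 28*A^7*y^5 + 56*A^7*y^6 + 32*A^7*y^7 - 48*A^7*y^8 + 32*A^7*y^9 + 56*A^7*y^10 - 28*A^7*y^11 - 4*A^7*y^12 - 4*A^7*y^13 - 3*A^9*y^4 - 20*A^9*y^5 + 22*A^9*y^6 + 20*A^9*y^7 + 32*A^9*y^8 + 20*A^9*y^9 + 22*A^9*y^10 - 20*A^9*y^11 - 3*A^9*y^12 - 4*A^11*y^5 - 4*A^11*y^6 + 4*A^11*y^7 + 64*A^11*y^8 + 4*A^11*y^9 - 4*A^11*y^10 - 4*A^11*y^11 - 2*A^13*y^6 + 32*A^13*y^8 - 2*A^13*y^10 + 8*A^15*y^8 + A^17*y^8))"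
    unfolding M4_mult[OF x0] by (rule M4_cong[OF refl]; algebra)
  have q: "(- (1) - A^2 - 2*A^2*y - 11*A^2*y^2 + 4*A^2*y^3 + 7*A^2*y^4 - 6*A^2*y^5 - 3*A^2*y^6 + 8*A^2*y^7 - A^2*y^8 - 6*A^2*y^9 + A^2*y^10 + 4*A^2*y^11 - A^2*y^12 - 2*A^2*y^13 + A^2*y^14 - 2*A^4*y - 17*A^4*y^2 - 12*A^4*y^3 - 22*A^4*y^4 + 26*A^4*y^5 + 25*A^4*y^6 - 24*A^4*y^7 - 20*A^4*y^8 + 26*A^4*y^9 - A^4*y^10 - 12*A^4*y^11 + 6*A^4*y^12 - 2*A^4*y^13 + A^4*y^14 - 6*A^6*y^2 - 24*A^6*y^3 - 66*A^6*y^4 + 16*A^6*y^5 + 44*A^6*y^6 + 16*A^6*y^7 - 52*A^6*y^8 + 16*A^6*y^9 + 14*A^6*y^10 - 24*A^6*y^11 + 10*A^6*y^12 - 8*A^8*y^3 - 47*A^8*y^4 - 48*A^8*y^5 - 12*A^8*y^6 + 112*A^8*y^7 - 42*A^8*y^8 - 48*A^8*y^9 + 28*A^8*y^10 - 8*A^8*y^11 + 3*A^8*y^12 - 10*A^10*y^4 - 40*A^10*y^5 - 50*A^10*y^6 + 80*A^10*y^7 - 10*A^10*y^8 - 40*A^10*y^9 + 14*A^10*y^10 - 8*A^12*y^5 - 26*A^12*y^6 + 16*A^12*y^7 - 4*A^12*y^8 - 8*A^12*y^9 + 2*A^12*y^10 - 4*A^14*y^6 - 4*A^14*y^8 - A^16*y^8)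 - (- (y^16) + A^2*y^2 - 2*A^2*y^3 - A^2*y^4 + 4*A^2*y^5 + A^2*y^6 - 6*A^2*y^7 - A^2*y^8 + 8*A^2*y^9 - 3*A^2*y^10 - 6*A^2*y^11 + 7*A^2*y^12 + 4*A^2*y^13 - 11*A^2*y^14 - 2*A^2*y^15 - A^2*y^16 + A^4*y^2 - 2*A^4*y^3 + 6*A^4*y^4 - 12*A^4*y^5 - A^4*y^6 + 26*A^4*y^7 - 20*A^4*y^8 - 24*A^4*y^9 + 25*A^4*y^10 + 26*A^4*y^11 - 22*A^4*y^12 - 12*A^4*y^13 - 17*A^4*y^14 - 2*A^4*y^15 + 10*A^6*y^4 - 24*A^6*y^5 + 14*A^6*y^6 + 16*A^6*y^7 - 52*A^6*y^8 + 16*A^6*y^9 + 44*A^6*y^10 + 16*A^6*y^11 - 66*A^6*y^12 - 24*A^6*y^13 - 6*A^6*y^14 + 3*A^8*y^4 - 8*A^8*y^5 + 28*A^8*y^6 - 48*A^8*y^7 - 42*A^8*y^8 + 112*A^8*y^9 - 12*A^8*y^10 - 48*A^8*y^11 - 47*A^8*y^12 - 8*A^8*y^13 + 14*A^10*y^6 - 40*A^10*y^7 - 10*A^10*y^8 + 80*A^10*y^9 - 50*A^10*y^10 - 40*A^10*y^11 - 10*A^10*y^12 + 2*A^12*y^6 - 8*A^12*y^7 - 4*A^12*y^8 + 16*A^12*y^9 - 26*A^12*y^10 - 8*A^12*y^11 - 4*A^14*y^8 - 4*A^14*y^10 - A^16*y^8) = ((- (1) + y^2 - y^4 + y^6 -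 A^2 - 3*A^2*y^2 + 3*A^2*y^4 + A^2*y^6 - 6*A^4*y^2 + 6*A^4*y^4 - 2*A^6*y^2 + 2*A^6*y^4)) * ((1 + y^2 + y^8 + y^10 + 2*A^2*y + 8*A^2*y^2 - 4*A^2*y^3 + 4*A^2*y^5 - 4*A^2*y^7 + 8*A^2*y^8 + 2*A^2*y^9 + 4*A^4*y^2 + 8*A^4*y^3 + 8*A^4*y^4 - 16*A^4*y^5 + 8*A^4*y^6 + 8*A^4*y^7 + 4*A^4*y^8 + 4*A^6*y^3 + 8*A^6*y^4 - 8*A^6*y^5 + 8*A^6*y^6 + 4*A^6*y^7 + 2*A^8*y^4 + 2*A^8*y^6))" by algebra
  have q0: "(- (1) - A^2 - 2*A^2*y - 11*A^2*y^2 + 4*A^2*y^3 + 7*A^2*y^4 - 6*A^2*y^5 - 3*A^2*y^6 + 8*A^2*y^7 - A^2*y^8 - 6*A^2*y^9 + A^2*y^10 + 4*A^2*y^11 - A^2*y^12 - 2*A^2*y^13 + A^2*y^14 - 2*A^4*y - 17*A^4*y^2 - 12*A^4*y^3 - 22*A^4*y^4 + 26*A^4*y^5 + 25*A^4*y^6 - 24*A^4*y^7 - 20*A^4*y^8 + 26*A^4*y^9 - A^4*y^10 - 12*A^4*y^11 + 6*A^4*y^12 - 2*A^4*y^13 + A^4*y^14 - 6*A^6*y^2 - 24*A^6*y^3 - 66*A^6*y^4 + 16*A^6*y^5 + 44*A^6*y^6 + 16*A^6*y^7 - 52*A^6*y^8 + 16*A^6*y^9 + 14*A^6*y^10 - 24*A^6*y^11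 + 10*A^6*y^12 - 8*A^8*y^3 - 47*A^8*y^4 - 48*A^8*y^5 - 12*A^8*y^6 + 112*A^8*y^7 - 42*A^8*y^8 - 48*A^8*y^9 + 28*A^8*y^10 - 8*A^8*y^11 + 3*A^8*y^12 - 10*A^10*y^4 - 40*A^10*y^5 - 50*A^10*y^6 + 80*A^10*y^7 - 10*A^10*y^8 - 40*A^10*y^9 + 14*A^10*y^10 - 8*A^12*y^5 - 26*A^12*y^6 + 16*A^12*y^7 - 4*A^12*y^8 - 8*A^12*y^9 + 2*A^12*y^10 - 4*A^14*y^6 - 4*A^14*y^8 - A^16*y^8) - (- (y^16) + A^2*y^2 - 2*A^2*y^3 - A^2*y^4 + 4*A^2*y^5 + A^2*y^6 - 6*A^2*y^7 - A^2*y^8 + 8*A^2*y^9 - 3*A^2*y^10 - 6*A^2*y^11 + 7*A^2*y^12 + 4*A^2*y^13 - 11*A^2*y^14 - 2*A^2*y^15 - A^2*y^16 + A^4*y^2 - 2*A^4*y^3 + 6*A^4*y^4 - 12*A^4*y^5 - A^4*y^6 + 26*A^4*y^7 - 20*A^4*y^8 - 24*A^4*y^9 + 25*A^4*y^10 + 26*A^4*y^11 - 22*A^4*y^12 - 12*A^4*y^13 - 17*A^4*y^14 - 2*A^4*y^15 + 10*A^6*y^4 - 24*A^6*y^5 + 14*A^6*y^6 + 16*A^6*y^7 - 52*A^6*y^8 + 16*A^6*y^9 + 44*A^6*y^10 + 16*A^6*y^11 - 66*A^6*y^12 - 24*A^6*y^13 - 6*A^6*y^14 + 3*A^8*y^4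 - 8*A^8*y^5 + 28*A^8*y^6 - 48*A^8*y^7 - 42*A^8*y^8 + 112*A^8*y^9 - 12*A^8*y^10 - 48*A^8*y^11 - 47*A^8*y^12 - 8*A^8*y^13 + 14*A^10*y^6 - 40*A^10*y^7 - 10*A^10*y^8 + 80*A^10*y^9 - 50*A^10*y^10 - 40*A^10*y^11 - 10*A^10*y^12 + 2*A^12*y^6 - 8*A^12*y^7 - 4*A^12*y^8 + 16*A^12*y^9 - 26*A^12*y^10 - 8*A^12*y^11 - 4*A^14*y^8 - 4*A^14*y^10 - A^16*y^8) = 0" unfolding q Pc by (rule mult_zero_right)
  have w21: "(- (y^16) + A^2*y^2 - 2*A^2*y^3 - A^2*y^4 + 4*A^2*y^5 + A^2*y^6 - 6*A^2*y^7 - A^2*y^8 + 8*A^2*y^9 - 3*A^2*y^10 - 6*A^2*y^11 + 7*A^2*y^12 + 4*A^2*y^13 - 11*A^2*y^14 - 2*A^2*y^15 - A^2*y^16 + A^4*y^2 - 2*A^4*y^3 + 6*A^4*y^4 - 12*A^4*y^5 - A^4*y^6 + 26*A^4*y^7 - 20*A^4*y^8 - 24*A^4*y^9 + 25*A^4*y^10 + 26*A^4*y^11 - 22*A^4*y^12 - 12*A^4*y^13 - 17*A^4*y^14 - 2*A^4*y^15 + 10*A^6*y^4 - 24*A^6*y^5 + 14*A^6*y^6 + 16*A^6*y^7 - 52*A^6*y^8 + 16*A^6*y^9 + 44*A^6*y^10 + 16*A^6*y^11 - 66*A^6*y^12 - 24*A^6*y^13 - 6*A^6*y^14 + 3*A^8*y^4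 - 8*A^8*y^5 + 28*A^8*y^6 - 48*A^8*y^7 - 42*A^8*y^8 + 112*A^8*y^9 - 12*A^8*y^10 - 48*A^8*y^11 - 47*A^8*y^12 - 8*A^8*y^13 + 14*A^10*y^6 - 40*A^10*y^7 - 10*A^10*y^8 + 80*A^10*y^9 - 50*A^10*y^10 - 40*A^10*y^11 - 10*A^10*y^12 + 2*A^12*y^6 - 8*A^12*y^7 - 4*A^12*y^8 + 16*A^12*y^9 - 26*A^12*y^10 - 8*A^12*y^11 - 4*A^14*y^8 - 4*A^14*y^10 - A^16*y^8) = (- (1) - A^2 - 2*A^2*y - 11*A^2*y^2 + 4*A^2*y^3 + 7*A^2*y^4 - 6*A^2*y^5 - 3*A^2*y^6 + 8*A^2*y^7 - A^2*y^8 - 6*A^2*y^9 + A^2*y^10 + 4*A^2*y^11 - A^2*y^12 - 2*A^2*y^13 + A^2*y^14 - 2*A^4*y - 17*A^4*y^2 - 12*A^4*y^3 - 22*A^4*y^4 + 26*A^4*y^5 + 25*A^4*y^6 - 24*A^4*y^7 - 20*A^4*y^8 + 26*A^4*y^9 - A^4*y^10 - 12*A^4*y^11 + 6*A^4*y^12 - 2*A^4*y^13 + A^4*y^14 - 6*A^6*y^2 - 24*A^6*y^3 - 66*A^6*y^4 + 16*A^6*y^5 + 44*A^6*y^6 + 16*A^6*y^7 - 52*A^6*y^8 + 16*A^6*y^9 + 14*A^6*y^10 - 24*A^6*y^11 + 10*A^6*y^12 - 8*A^8*y^3 - 47*A^8*y^4 - 48*A^8*y^5 - 12*A^8*y^6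 + 112*A^8*y^7 - 42*A^8*y^8 - 48*A^8*y^9 + 28*A^8*y^10 - 8*A^8*y^11 + 3*A^8*y^12 - 10*A^10*y^4 - 40*A^10*y^5 - 50*A^10*y^6 + 80*A^10*y^7 - 10*A^10*y^8 - 40*A^10*y^9 + 14*A^10*y^10 - 8*A^12*y^5 - 26*A^12*y^6 + 16*A^12*y^7 - 4*A^12*y^8 - 8*A^12*y^9 + 2*A^12*y^10 - 4*A^14*y^6 - 4*A^14*y^8 - A^16*y^8)" using q0 unfolding right_minus_eq by (rule sym)
  define Wm where "Wm = W_mat S T"
  have Wm: "Wm = Si ** (S ** T ** Si ** Ti ** (S ** T ** Si ** Ti)) ** (S ** Ti ** Si ** T ** (S ** Ti ** Si ** T))"
    unfolding Wm_def W_mat_def Let_def iS iT ..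
  have Wv: "Wm = (M4 x ((s * ((s * (s/y) * s * (s/y))*(s * (s/y) * s * (s/y))))*((s * (s/y) * s * (s/y))*(s * (s/y) * s * (s/y)))) (- (A*y) + A*y^2 + A*y^3 - A*y^4 - A*y^5 + A*y^6 + A*y^7 - A*y^8 + A*y^9 + A*y^10 - A*y^11 - A*y^12 + A*y^13 + A*y^14 - A*y^15 - A^3*y - 7*A^3*y^3 + 12*A^3*y^4 + 7*A^3*y^5 - 20*A^3*y^6 + A^3*y^7 + 24*A^3*y^8 + A^3*y^9 - 20*A^3*y^10 + 7*A^3*y^11 + 12*A^3*y^12 - 7*A^3*y^13 - A^3*y^15 - A^5*y^2 - 12*A^5*y^3 + 12*A^5*y^4 - 4*A^5*y^5 + 11*A^5*y^6 + 16*A^5*y^7 - 16*A^5*y^8 + 16*A^5*y^9 + 11*A^5*y^10 - 4*A^5*y^11 + 12*A^5*y^12 - 12*A^5*y^13 - A^5*y^14 - 4*A^7*y^3 - 4*A^7*y^4 - 28*A^7*y^5 + 56*A^7*y^6 + 32*A^7*y^7 - 48*A^7*y^8 + 32*A^7*y^9 + 56*A^7*y^10 - 28*A^7*y^11 - 4*A^7*y^12 - 4*A^7*y^13 - 3*A^9*y^4 - 20*A^9*y^5 + 22*A^9*y^6 + 20*A^9*y^7 + 32*A^9*y^8 + 20*A^9*y^9 + 22*A^9*y^10 - 20*A^9*y^11 - 3*A^9*y^12 - 4*A^11*y^5 - 4*A^11*y^6 + 4*A^11*y^7 + 64*A^11*y^8 + 4*A^11*y^9 - 4*A^11*y^10 -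 4*A^11*y^11 - 2*A^13*y^6 + 32*A^13*y^8 - 2*A^13*y^10 + 8*A^15*y^8 + A^17*y^8) (- (1) - A^2 - 2*A^2*y - 11*A^2*y^2 + 4*A^2*y^3 + 7*A^2*y^4 - 6*A^2*y^5 - 3*A^2*y^6 + 8*A^2*y^7 - A^2*y^8 - 6*A^2*y^9 + A^2*y^10 + 4*A^2*y^11 - A^2*y^12 - 2*A^2*y^13 + A^2*y^14 - 2*A^4*y - 17*A^4*y^2 - 12*A^4*y^3 - 22*A^4*y^4 + 26*A^4*y^5 + 25*A^4*y^6 - 24*A^4*y^7 - 20*A^4*y^8 + 26*A^4*y^9 - A^4*y^10 - 12*A^4*y^11 + 6*A^4*y^12 - 2*A^4*y^13 + A^4*y^14 - 6*A^6*y^2 - 24*A^6*y^3 - 66*A^6*y^4 + 16*A^6*y^5 + 44*A^6*y^6 + 16*A^6*y^7 - 52*A^6*y^8 + 16*A^6*y^9 + 14*A^6*y^10 - 24*A^6*y^11 + 10*A^6*y^12 - 8*A^8*y^3 - 47*A^8*y^4 - 48*A^8*y^5 - 12*A^8*y^6 + 112*A^8*y^7 - 42*A^8*y^8 - 48*A^8*y^9 + 28*A^8*y^10 - 8*A^8*y^11 + 3*A^8*y^12 - 10*A^10*y^4 - 40*A^10*y^5 - 50*A^10*y^6 + 80*A^10*y^7 - 10*A^10*y^8 - 40*A^10*y^9 + 14*A^10*y^10 - 8*A^12*y^5 - 26*A^12*y^6 + 16*A^12*y^7 - 4*A^12*y^8 - 8*A^12*y^9 + 2*A^12*y^10 - 4*A^14*y^6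 - 4*A^14*y^8 - A^16*y^8) (- (1) - A^2 - 2*A^2*y - 11*A^2*y^2 + 4*A^2*y^3 + 7*A^2*y^4 - 6*A^2*y^5 - 3*A^2*y^6 + 8*A^2*y^7 - A^2*y^8 - 6*A^2*y^9 + A^2*y^10 + 4*A^2*y^11 - A^2*y^12 - 2*A^2*y^13 + A^2*y^14 - 2*A^4*y - 17*A^4*y^2 - 12*A^4*y^3 - 22*A^4*y^4 + 26*A^4*y^5 + 25*A^4*y^6 - 24*A^4*y^7 - 20*A^4*y^8 + 26*A^4*y^9 - A^4*y^10 - 12*A^4*y^11 + 6*A^4*y^12 - 2*A^4*y^13 + A^4*y^14 - 6*A^6*y^2 - 24*A^6*y^3 - 66*A^6*y^4 + 16*A^6*y^5 + 44*A^6*y^6 + 16*A^6*y^7 - 52*A^6*y^8 + 16*A^6*y^9 + 14*A^6*y^10 - 24*A^6*y^11 + 10*A^6*y^12 - 8*A^8*y^3 - 47*A^8*y^4 - 48*A^8*y^5 - 12*A^8*y^6 + 112*A^8*y^7 - 42*A^8*y^8 - 48*A^8*y^9 + 28*A^8*y^10 - 8*A^8*y^11 + 3*A^8*y^12 - 10*A^10*y^4 - 40*A^10*y^5 - 50*A^10*y^6 + 80*A^10*y^7 - 10*A^10*y^8 - 40*A^10*y^9 + 14*A^10*y^10 - 8*A^12*y^5 - 26*A^12*y^6 + 16*A^12*y^7 - 4*A^12*y^8 - 8*A^12*y^9 + 2*A^12*y^10 - 4*A^14*y^6 - 4*A^14*y^8 - A^16*y^8) (- (A*y) + A*y^2 +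 A*y^3 - A*y^4 - A*y^5 + A*y^6 + A*y^7 - A*y^8 + A*y^9 + A*y^10 - A*y^11 - A*y^12 + A*y^13 + A*y^14 - A*y^15 - A^3*y - 7*A^3*y^3 + 12*A^3*y^4 + 7*A^3*y^5 - 20*A^3*y^6 + A^3*y^7 + 24*A^3*y^8 + A^3*y^9 - 20*A^3*y^10 + 7*A^3*y^11 + 12*A^3*y^12 - 7*A^3*y^13 - A^3*y^15 - A^5*y^2 - 12*A^5*y^3 + 12*A^5*y^4 - 4*A^5*y^5 + 11*A^5*y^6 + 16*A^5*y^7 - 16*A^5*y^8 + 16*A^5*y^9 + 11*A^5*y^10 - 4*A^5*y^11 + 12*A^5*y^12 - 12*A^5*y^13 - A^5*y^14 - 4*A^7*y^3 - 4*A^7*y^4 - 28*A^7*y^5 + 56*A^7*y^6 + 32*A^7*y^7 - 48*A^7*y^8 + 32*A^7*y^9 + 56*A^7*y^10 - 28*A^7*y^11 - 4*A^7*y^12 - 4*A^7*y^13 - 3*A^9*y^4 - 20*A^9*y^5 + 22*A^9*y^6 + 20*A^9*y^7 + 32*A^9*y^8 + 20*A^9*y^9 + 22*A^9*y^10 - 20*A^9*y^11 - 3*A^9*y^12 - 4*A^11*y^5 - 4*A^11*y^6 + 4*A^11*y^7 + 64*A^11*y^8 + 4*A^11*y^9 - 4*A^11*y^10 - 4*A^11*y^11 - 2*A^13*y^6 + 32*A^13*y^8 - 2*A^13*y^10 + 8*A^15*y^8 + A^17*y^8))" unfolding Wm c1 c2 cc1 cc2 sc w w21 ..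
  have inv: "invertible Wm" unfolding Wm
    by (intro invertible_mult iS iT iSi)
  have comm: "S ** Wm = Wm ** S"
    unfolding Wv S_def M4_mult[OF x0] apply (rule M4_cong) apply (simp add: mult.commute) by algebra+
  have "S ** Wm ** matrix_inv S ** matrix_inv Wm = Wm ** (S ** matrix_inv S) ** matrix_inv Wm"
    by (simp add: comm matrix_mul_assoc)
  also have "\<dots> = mat 1" using e1 iS inv_right[OF inv] by simp
  finally show ?thesis unfolding Wm_def S_def T_def .
qed

lemma RMc:
  fixes y A V :: complex
  assumes h: "2*(y*V) = y^2+1"
  shows "4*y^5 * RM_poly V A = (1 + y^2 + y^8 + y^10 + 2*A^2*y + 8*A^2*y^2 - 4*A^2*y^3 + 4*A^2*y^5 - 4*A^2*y^7 + 8*A^2*y^8 + 2*A^2*y^9 + 4*A^4*y^2 + 8*A^4*y^3 + 8*A^4*y^4 - 16*A^4*y^5 + 8*A^4*y^6 + 8*A^4*y^7 + 4*A^4*y^8 + 4*A^6*y^3 + 8*A^6*y^4 - 8*A^6*y^5 + 8*A^6*y^6 + 4*A^6*y^7 + 2*A^8*y^4 + 2*A^8*y^6)"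
proof -
  have "4*y^5 * RM_poly V A = (2*(y*V))^5 + 2*A^2*y*(2*(y*V))^4 + (4*A^4 + 8*A^2 - 4)*y^2*(2*(y*V))^3
     + (4*A^6 + 8*A^4 - 12*A^2)*y^3*(2*(y*V))^2 + 2*(A^8 + 4*A^6 - 2*A^4 - 12*A^2 + 1)*y^4*(2*(y*V)) + 4*y^5*(- 4*A^6 - 8*A^4 + 4*A^2)"
    unfolding RM_poly_def by algebra
  also have "\<dots> = (1 + y^2 + y^8 + y^10 + 2*A^2*y + 8*A^2*y^2 - 4*A^2*y^3 + 4*A^2*y^5 - 4*A^2*y^7 + 8*A^2*y^8 + 2*A^2*y^9 + 4*A^4*y^2 + 8*A^4*y^3 + 8*A^4*y^4 - 16*A^4*y^5 + 8*A^4*y^6 + 8*A^4*y^7 + 4*A^4*y^8 + 4*A^6*y^3 + 8*A^6*y^4 - 8*A^6*y^5 + 8*A^6*y^6 + 4*A^6*y^7 + 2*A^8*y^4 + 2*A^8*y^6)" unfolding h by algebra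
  finally show ?thesis .
qed

theorem theorem3p2:
  fixes \<alpha> :: real and \<rho> :: complex
  assumes "0 < \<alpha>" and "\<alpha> < 2 * pi"
    and "RM_poly (cosh \<rho>) (of_real (cot (\<alpha>/2))) = 0"
  shows "S_mat \<alpha> \<rho> ** W_mat (S_mat \<alpha> \<rho>) (T_mat \<alpha> \<rho>) ** matrix_inv (S_mat \<alpha> \<rho>)
           ** matrix_inv (W_mat (S_mat \<alpha> \<rho>) (T_mat \<alpha> \<rho>)) = mat 1"
proof -
  define x where "x = exp (\<rho>/2)"
  define y where "y = x^2"
  define s where "s = complex_of_real (sin (\<alpha>/2))"
  define A where "A = complex_of_real (cot (\<alpha>/2))"
  have x0: "x \<noteq> 0" unfolding x_def by simp
  have y0: "y \<noteq> 0" unfolding y_def using x0 by simp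
  have sp: "sin (\<alpha>/2) > 0" using assms(1,2) by (intro sin_gt_zero) auto
  have s0: "s \<noteq> 0" unfolding s_def using sp by simp
  have cA: "complex_of_real (cos (\<alpha>/2)) = s * A"
    unfolding s_def A_def cot_def using sp by (simp add: field_simps flip: of_real_mult)
  have "s^2*(A^2+1) = s^2 + (s*A)^2" by (simp add: algebra_simps power2_eq_square)
  also have "\<dots> = complex_of_real ((sin (\<alpha>/2))^2 + (cos (\<alpha>/2))^2)"
    by (subst cA[symmetric]) (simp only: s_def of_real_add of_real_power)
  also have "\<dots> = 1" by simp
  finally have sA: "s^2*(A^2+1) = 1" .
  have ey: "exp \<rho> = y" unfolding y_def x_def by (simp flip: exp_add add: power2_eq_square)
  have emx: "exp (-\<rho>/2) = 1/x"
  proof -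
    have "-\<rho>/2 = -(\<rho>/2)" by simp
    then show ?thesis unfolding x_def by (simp only: exp_minus inverse_eq_divide)
  qed
  have em: "exp (-\<rho>) = inverse y" by (simp add: exp_minus ey)
  have "2*(y*cosh \<rho>) = y*(y + inverse y)" by (simp add: cosh_field_def ey em)
  also have "\<dots> = y^2+1" using y0 by (simp add: field_simps power2_eq_square)
  finally have h: "2*(y*cosh \<rho>) = y^2+1" .
  have r: "RM_poly (cosh \<rho>) A = 0" using assms(3) unfolding A_def .
  have Pc: "(1 + y^2 + y^8 + y^10 + 2*A^2*y + 8*A^2*y^2 - 4*A^2*y^3 + 4*A^2*y^5 - 4*A^2*y^7 + 8*A^2*y^8 + 2*A^2*y^9 + 4*A^4*y^2 + 8*A^4*y^3 + 8*A^4*y^4 - 16*A^4*y^5 + 8*A^4*y^6 + 8*A^4*y^7 + 4*A^4*y^8 + 4*A^6*y^3 + 8*A^6*y^4 - 8*A^6*y^5 + 8*A^6*y^6 + 4*A^6*y^7 + 2*A^8*y^4 + 2*A^8*y^6) = 0" using RMc[OF h, of A] unfolding r mult_zero_right by (rule sym)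
  have S: "S_mat \<alpha> \<rho> = M4 x s A 1 1 A"
    unfolding S_mat_def M4_def cA emx x_def[symmetric] s_def[symmetric] using x0
    by (simp add: mult_ac)
  have T: "T_mat \<alpha> \<rho> = M4 x (s/y) (A*y) 1 (y^2) (A*y)"
    unfolding T_mat_def M4_def cA emx x_def[symmetric] s_def[symmetric] using x0 y0 unfolding y_def
    by (simp add: field_simps power2_eq_square)
  show ?thesis unfolding S T by (rule core[OF x0 y0 sA Pc])
qed

end
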